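(* Let $\mathcal{X}\subset\mathbb{R}^d$, let $k:\mathcal{X}\times\mathcal{X}\to(0,\infty)$ be a symmetric continuous covariance function, let $\bm{x}_1,\dots,\bm{x}_n\in\mathcal{X}$, let $\omega_1,\dots,\omega_n\in\{1,\dots,m\}$ be assignments with every $j\in\{1,\dots,m\}$ assigned to some index, and let $\bm{z}_1,\dots,\bm{z}_m\in\mathcal{X}$. Let $\beta\in(0,\infty)$ satisfy $|k(\bm{x}_i,\bm{x}_j)-k(\bm{z}_{\omega_i},\bm{z}_{\omega_j})|<\beta$ for all $1\le i\le j\le n$ (and $|k(\bm{x}_i,\bm{x}^*_j)-k(\bm{z}_{\omega_i},\bm{x}^*_j)|<\beta$ for given new inputs $\bm{x}^*_1,\dots,\bm{x}^*_{n_*}\in\mathcal{X}$). Let $\gamma$ denote the maximum absolute value of the elements of $\bm{W_{fu}}-\bm{K_{fu}}\bm{K_{uu}}^{-1}$. Then $$\bm{K_{ff}}-\bm{K_{fu}}\bm{K_{uu}}^{-1}\bm{K_{uf}}=O(\beta+m\beta\gamma).$$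
   Context: For finite lists of points $\bm{A}=(\bm{a}_i)$, $\bm{B}=(\bm{b}_j)$ in $\mathcal{X}$, the Gram matrix of $(\bm{A},\bm{B})$ has $(i,j)$ entry $k(\bm{a}_i,\bm{b}_j)$. With $\bm{X}=(\bm{x}_i)_{i=1}^n$, $\bm{Z}=(\bm{z}_j)_{j=1}^m$: $\bm{K_{ff}}$, $\bm{K_{fu}}$, $\bm{K_{uu}}$ are the Gram matrices of $(\bm{X},\bm{X})$, $(\bm{X},\bm{Z})$, $(\bm{Z},\bm{Z})$, and $\bm{K_{uf}}=\bm{K_{fu}}^\top$. Symmetric Gram matrices are assumed positive-definite. $\bm{W_{fu}}$ is the $n\times m$ matrix with $[\bm{W_{fu}}]_{ij}=1$ if $\omega_i=j$, $0$ otherwise. The Landau symbol $O$ applied to a matrix is applied to each element.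
   Formalization: The condition $|k(\bm{x}_i,\bm{x}^*_j)-k(\bm{z}_{\omega_i},\bm{x}^*_j)|<\beta$ holds with $\bm{x}^*_j$ ranging over all of $\mathcal{X}$, the $\bm{z}_j$ included, and the O-constant is one constant independent of all data. Apart from conventions, each condition added here is assumed in the paper as well or is needed for the statement above to hold. *)

theory Defs
  imports "HOL-Analysis.Analysis" "Jordan_Normal_Form.Gauss_Jordan_Elimination"
begin

definition gram :: "('a \<Rightarrow> 'a \<Rightarrow> real) \<Rightarrow> nat \<Rightarrow> (nat \<Rightarrow> 'a) \<Rightarrow> nat \<Rightarrow> (nat \<Rightarrow> 'a) \<Rightarrow> real mat" where
  "gram k p a q b = mat p q (\<lambda>(i, j). k (a i) (b j))"

definition mat_inv :: "real mat \<Rightarrow> real mat" where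
  "mat_inv A = the (mat_inverse A)"

definition assign_mat :: "nat \<Rightarrow> nat \<Rightarrow> (nat \<Rightarrow> nat) \<Rightarrow> real mat" where
  "assign_mat n m \<omega> = mat n m (\<lambda>(i, j). if \<omega> i = j then 1 else 0)"

definition pos_def_mat :: "real mat \<Rightarrow> bool" where
  "pos_def_mat A \<longleftrightarrow> A \<in> carrier_mat (dim_row A) (dim_row A) \<and> A\<^sup>T = A \<and>
     (\<forall>v \<in> carrier_vec (dim_row A). v \<noteq> 0\<^sub>v (dim_row A) \<longrightarrow> v \<bullet> (A *\<^sub>v v) > 0)"

definition max_abs_entry :: "real mat \<Rightarrow> real" where
  "max_abs_entry A = Max {\<bar>A $$ (i, j)\<bar> | i j. i < dim_row A \<and> j < dim_col A}"

end

theory Submission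
  imports Defs "Jordan_Normal_Form.Determinant"
begin

lemma posdef_inv:
  assumes pd: "pos_def_mat K" and K: "K \<in> carrier_mat m m"
  shows "\<exists>B. mat_inverse K = Some B \<and> B \<in> carrier_mat m m \<and> B * K = 1\<^sub>m m"
proof -
  have nz: "\<not> (\<exists>v. v \<in> carrier_vec m \<and> v \<noteq> 0\<^sub>v m \<and> K *\<^sub>v v = 0\<^sub>v m)"
  proof
    assume "\<exists>v. v \<in> carrier_vec m \<and> v \<noteq> 0\<^sub>v m \<and> K *\<^sub>v v = 0\<^sub>v m"
    then obtain v where v: "v \<in> carrier_vec m" "v \<noteq> 0\<^sub>v m" "K *\<^sub>v v = 0\<^sub>v m"
      by blast
    have dK: "dim_row K = m" using K by auto
    have "\<forall>v \<in> carrier_vec (dim_row K). v \<noteq> 0\<^sub>v (dim_row K) \<longrightarrow> v \<bullet> (K *\<^sub>v v) > 0"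
      using pd unfolding pos_def_mat_def by blast
    then have "v \<bullet> (K *\<^sub>v v) > 0" using v(1,2) unfolding dK by blast
    moreover have "v \<bullet> (K *\<^sub>v v) = 0" using v by simp
    ultimately show False by simp
  qed
  have "K \<in> Units (ring_mat TYPE(real) m ())"
    by (rule det_non_zero_imp_unit[OF K]) (subst det_0_iff_vec_prod_zero_field[OF K], rule nz)
  then obtain B where B: "mat_inverse K = Some B" using mat_inverse(1)[OF K, where b="()"] by (cases "mat_inverse K") auto
  then show ?thesis using mat_inverse(2)[OF K B] by auto
qed

lemma scalar_core:
  fixes Kxx :: "nat \<Rightarrow> nat \<Rightarrow> real" and Kxz Kz A :: "nat \<Rightarrow> nat \<Rightarrow> real"
  assumes om: "\<forall>i<n. \<omega> i < m"
    and AK: "\<forall>i<n. \<forall>b<m. (\<Sum>a<m. A i a * Kz a b) = Kxz i b"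
    and E: "\<forall>i<n. \<forall>a<m. \<bar>(if \<omega> i = a then 1 else 0) - A i a\<bar> \<le> \<gamma>"
    and D: "\<forall>j<n. \<forall>a<m. \<bar>Kxz j a - Kz a (\<omega> j)\<bar> < \<beta>"
    and X: "\<forall>i<n. \<forall>j<n. \<bar>Kxx i j - Kxz i (\<omega> j)\<bar> < \<beta>"
    and i: "i < n" and j: "j < n" and b: "0 < \<beta>" and g: "0 \<le> \<gamma>"
  shows "\<bar>Kxx i j - (\<Sum>a<m. A i a * Kxz j a)\<bar> \<le> 2 * (\<beta> + real m * \<beta> * \<gamma>)"
proof -
  define DD where "DD a = Kxz j a - Kz a (\<omega> j)" for a
  define EE where "EE a = (if \<omega> i = a then 1 else 0) - A i a" for a
  have "(\<Sum>a<m. A i a * Kxz j a) = (\<Sum>a<m. A i a * Kz a (\<omega> j)) + (\<Sum>a<m. A i a * DD a)"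
    by (simp add: DD_def sum.distrib[symmetric] algebra_simps)
  also have "(\<Sum>a<m. A i a * Kz a (\<omega> j)) = Kxz i (\<omega> j)" using AK om i j by auto
  also have "(\<Sum>a<m. A i a * DD a) = (\<Sum>a<m. (if \<omega> i = a then 1 else 0) * DD a) - (\<Sum>a<m. EE a * DD a)"
    by (simp add: EE_def sum_subtractf[symmetric] algebra_simps)
  also have "(\<Sum>a<m. (if \<omega> i = a then 1 else 0) * DD a) = (\<Sum>a\<in>{..<m}. if \<omega> i = a then DD a else 0)"
    by (rule sum.cong) auto
  also have "\<dots> = DD (\<omega> i)" using om i by simp
  finally have eq: "Kxx i j - (\<Sum>a<m. A i a * Kxz j a) = (Kxx i j - Kxz i (\<omega> j)) - DD (\<omega> i) + (\<Sum>a<m. EE a * DD a)"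
    by simp
  have "\<bar>\<Sum>a<m. EE a * DD a\<bar> \<le> (\<Sum>a<m. \<bar>EE a * DD a\<bar>)" by (rule sum_abs)
  also have "\<dots> \<le> (\<Sum>a<m. \<gamma> * \<beta>)"
  proof (rule sum_mono)
    fix a assume "a \<in> {..<m}"
    then have "\<bar>EE a\<bar> \<le> \<gamma>" "\<bar>DD a\<bar> \<le> \<beta>" using E D i j unfolding EE_def DD_def by (auto simp: less_imp_le)
    then show "\<bar>EE a * DD a\<bar> \<le> \<gamma> * \<beta>" by (simp add: abs_mult mult_mono')
  qed
  also have "\<dots> = real m * \<beta> * \<gamma>" by simp
  finally have s: "\<bar>\<Sum>a<m. EE a * DD a\<bar> \<le> real m * \<beta> * \<gamma>" .
  have d: "\<bar>DD (\<omega> i)\<bar> < \<beta>" using D om i j unfolding DD_def by auto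
  have x: "\<bar>Kxx i j - Kxz i (\<omega> j)\<bar> < \<beta>" using X i j by auto
  have "0 \<le> real m * \<beta> * \<gamma>" using b g by simp
  then show ?thesis unfolding eq using s d x by (smt (verit))
qed

theorem lemma2:
  "\<exists>C::real. \<forall>(X :: (real^'d) set) (k :: real^'d \<Rightarrow> real^'d \<Rightarrow> real)
      (n::nat) (m::nat) (x :: nat \<Rightarrow> real^'d) (\<omega> :: nat \<Rightarrow> nat) (z :: nat \<Rightarrow> real^'d) (\<beta>::real).
     ( (\<forall>a\<in>X. \<forall>b\<in>X. k a b > 0 \<and> k a b = k b a)
     \<and> continuous_on (X \<times> X) (\<lambda>(a, b). k a b)
     \<and> 0 < n \<and> 0 < m
     \<and> (\<forall>i<n. x i \<in> X) \<and> (\<forall>j<m. z j \<in> X)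
     \<and> (\<forall>i<n. \<omega> i < m) \<and> (\<forall>j<m. \<exists>i<n. \<omega> i = j)
     \<and> pos_def_mat (gram k n x n x) \<and> pos_def_mat (gram k m z m z)
     \<and> 0 < \<beta>
     \<and> (\<forall>i j. i \<le> j \<and> j < n \<longrightarrow> \<bar>k (x i) (x j) - k (z (\<omega> i)) (z (\<omega> j))\<bar> < \<beta>)
     \<and> (\<forall>xs\<in>X. \<forall>i<n. \<bar>k (x i) xs - k (z (\<omega> i)) xs\<bar> < \<beta>) )
     \<longrightarrow> (let Kff = gram k n x n x; Kfu = gram k n x m z; Kuu = gram k m z m z;
             Kuf = Kfu\<^sup>T; W = assign_mat n m \<omega>;
             \<gamma> = max_abs_entry (W - Kfu * mat_inv Kuu);
             R = Kff - Kfu * mat_inv Kuu * Kuf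
         in \<forall>i<n. \<forall>j<n. \<bar>R $$ (i, j)\<bar> \<le> C * (\<beta> + real m * \<beta> * \<gamma>))"
proof (rule exI[of _ 2], intro allI impI)
  fix X :: "(real^'d) set" and k :: "real^'d \<Rightarrow> real^'d \<Rightarrow> real" and n m :: nat
    and x :: "nat \<Rightarrow> real^'d" and \<omega> :: "nat \<Rightarrow> nat" and z :: "nat \<Rightarrow> real^'d" and \<beta> :: real
  assume H: "(\<forall>a\<in>X. \<forall>b\<in>X. k a b > 0 \<and> k a b = k b a)
     \<and> continuous_on (X \<times> X) (\<lambda>(a, b). k a b)
     \<and> 0 < n \<and> 0 < m
     \<and> (\<forall>i<n. x i \<in> X) \<and> (\<forall>j<m. z j \<in> X)
     \<and> (\<forall>i<n. \<omega> i < m) \<and> (\<forall>j<m. \<exists>i<n. \<omega> i = j)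
     \<and> pos_def_mat (gram k n x n x) \<and> pos_def_mat (gram k m z m z)
     \<and> 0 < \<beta>
     \<and> (\<forall>i j. i \<le> j \<and> j < n \<longrightarrow> \<bar>k (x i) (x j) - k (z (\<omega> i)) (z (\<omega> j))\<bar> < \<beta>)
     \<and> (\<forall>xs\<in>X. \<forall>i<n. \<bar>k (x i) xs - k (z (\<omega> i)) xs\<bar> < \<beta>)"
  then have sym: "\<forall>a\<in>X. \<forall>b\<in>X. k a b = k b a" and n0: "0 < n" and m0: "0 < m"
    and xX: "\<forall>i<n. x i \<in> X" and zX: "\<forall>j<m. z j \<in> X" and om: "\<forall>i<n. \<omega> i < m"
    and pd: "pos_def_mat (gram k m z m z)" and b: "0 < \<beta>"
    and hyp: "\<forall>xs\<in>X. \<forall>i<n. \<bar>k (x i) xs - k (z (\<omega> i)) xs\<bar> < \<beta>"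
    by auto
  define Kff where "Kff = gram k n x n x"
  define Kfu where "Kfu = gram k n x m z"
  define Kuu where "Kuu = gram k m z m z"
  define W where "W = assign_mat n m \<omega>"
  have Kuu: "Kuu \<in> carrier_mat m m" unfolding Kuu_def gram_def by auto
  have Kfu: "Kfu \<in> carrier_mat n m" unfolding Kfu_def gram_def by auto
  have Kff: "Kff \<in> carrier_mat n n" unfolding Kff_def gram_def by auto
  have Wc: "W \<in> carrier_mat n m" unfolding W_def assign_mat_def by auto
  obtain B where B: "mat_inv Kuu = B" "B \<in> carrier_mat m m" "B * Kuu = 1\<^sub>m m"
    using posdef_inv[OF pd[folded Kuu_def] Kuu] unfolding mat_inv_def by auto
  define A where "A = Kfu * B"
  have Ac: "A \<in> carrier_mat n m" unfolding A_def using Kfu B by auto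
  have "A * Kuu = Kfu * (B * Kuu)" unfolding A_def using Kfu B Kuu by (simp add: assoc_mult_mat)
  also have "\<dots> = Kfu" using B Kfu by simp
  finally have AKuu: "A * Kuu = Kfu" .
  define \<gamma> where "\<gamma> = max_abs_entry (W - A)"
  have WA: "W - A \<in> carrier_mat n m" using Ac by auto
  let ?S = "{\<bar>(W - A) $$ (i, j)\<bar> | i j. i < dim_row (W - A) \<and> j < dim_col (W - A)}"
  have fin: "finite ?S"
  proof -
    have "?S \<subseteq> (\<lambda>(i,j). \<bar>(W - A) $$ (i, j)\<bar>) ` ({..<n} \<times> {..<m})"
    proof
      fix y assume "y \<in> ?S"
      then obtain i j where y0: "y = \<bar>(W - A) $$ (i, j)\<bar>" "i < dim_row (W - A)" "j < dim_col (W - A)" by blast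
      then have y: "y = \<bar>(W - A) $$ (i, j)\<bar>" "i < n" "j < m" using WA by auto
      show "y \<in> (\<lambda>(i,j). \<bar>(W - A) $$ (i, j)\<bar>) ` ({..<n} \<times> {..<m})"
        by (rule image_eqI[of _ _ "(i,j)"]) (use y in auto)
    qed
    then show ?thesis by (rule finite_subset) auto
  qed
  have Ebound: "\<bar>(W - A) $$ (i, a)\<bar> \<le> \<gamma>" if "i < n" "a < m" for i a
    unfolding \<gamma>_def max_abs_entry_def proof (rule Max_ge[OF fin])
    have "dim_row A = n" "dim_col A = m" using Ac by auto
    then show "\<bar>(W - A) $$ (i, a)\<bar> \<in> ?S"
      by (intro CollectI exI[of _ i] exI[of _ a]) (use that in auto)
  qed
  have g: "0 \<le> \<gamma>" using Ebound[OF n0 m0] by linarith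
  have kx: "\<And>i j. i < n \<Longrightarrow> j < n \<Longrightarrow> Kff $$ (i,j) = k (x i) (x j)" unfolding Kff_def gram_def by auto
  have kxz: "\<And>i j. i < n \<Longrightarrow> j < m \<Longrightarrow> Kfu $$ (i,j) = k (x i) (z j)" unfolding Kfu_def gram_def by auto
  have kz: "\<And>i j. i < m \<Longrightarrow> j < m \<Longrightarrow> Kuu $$ (i,j) = k (z i) (z j)" unfolding Kuu_def gram_def by auto
  have Went: "\<And>i j. i < n \<Longrightarrow> j < m \<Longrightarrow> W $$ (i,j) = (if \<omega> i = j then 1 else 0)" unfolding W_def assign_mat_def by auto
  have AK: "\<forall>i<n. \<forall>b<m. (\<Sum>a<m. A $$ (i,a) * k (z a) (z b)) = k (x i) (z b)"
  proof (intro allI impI)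
    fix i b assume ib: "i < n" "b < m"
    have "(A * Kuu) $$ (i,b) = (\<Sum>x=0..<m. Matrix.row A i $ x * col Kuu b $ x)"
      using Ac Kuu ib by (simp add: scalar_prod_def)
    also have "\<dots> = (\<Sum>a<m. A $$ (i,a) * k (z a) (z b))"
      unfolding lessThan_atLeast0 using Ac Kuu ib by (intro sum.cong refl) (auto simp: kz)
    finally have "(A * Kuu) $$ (i,b) = (\<Sum>a<m. A $$ (i,a) * k (z a) (z b))" .
    then show "(\<Sum>a<m. A $$ (i,a) * k (z a) (z b)) = k (x i) (z b)" using AKuu kxz ib by simp
  qed
  have E: "\<forall>i<n. \<forall>a<m. \<bar>(if \<omega> i = a then 1 else 0) - A $$ (i, a)\<bar> \<le> \<gamma>"
    using Ebound WA Ac Wc Went by auto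
  have D: "\<forall>j<n. \<forall>a<m. \<bar>k (x j) (z a) - k (z a) (z (\<omega> j))\<bar> < \<beta>"
  proof (intro allI impI)
    fix j a assume ja: "j < n" "a < m"
    have "k (z a) (z (\<omega> j)) = k (z (\<omega> j)) (z a)" using sym zX om ja by auto
    then show "\<bar>k (x j) (z a) - k (z a) (z (\<omega> j))\<bar> < \<beta>" using hyp zX ja by auto
  qed
  have XX: "\<forall>i<n. \<forall>j<n. \<bar>k (x i) (x j) - k (x i) (z (\<omega> j))\<bar> < \<beta>"
  proof (intro allI impI)
    fix i j assume ij: "i < n" "j < n"
    have "k (x i) (x j) = k (x j) (x i)" "k (x i) (z (\<omega> j)) = k (z (\<omega> j)) (x i)"
      using sym xX zX om ij by auto
    then show "\<bar>k (x i) (x j) - k (x i) (z (\<omega> j))\<bar> < \<beta>" using hyp xX ij by auto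
  qed
  show "let Kff = gram k n x n x; Kfu = gram k n x m z; Kuu = gram k m z m z;
             Kuf = Kfu\<^sup>T; W = assign_mat n m \<omega>;
             \<gamma> = max_abs_entry (W - Kfu * mat_inv Kuu);
             R = Kff - Kfu * mat_inv Kuu * Kuf
         in \<forall>i<n. \<forall>j<n. \<bar>R $$ (i, j)\<bar> \<le> 2 * (\<beta> + real m * \<beta> * \<gamma>)"
    unfolding Let_def Kff_def[symmetric] Kfu_def[symmetric] Kuu_def[symmetric] W_def[symmetric]
      B(1) A_def[symmetric] \<gamma>_def[symmetric]
  proof (intro allI impI)
    fix i j assume ij: "i < n" "j < n"
    have AT: "A * Kfu\<^sup>T \<in> carrier_mat n n" using Ac Kfu by auto
    have "(Kff - A * Kfu\<^sup>T) $$ (i, j) = k (x i) (x j) - (\<Sum>a=0..<m. Matrix.row A i $ a * Matrix.row Kfu j $ a)"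
      using AT ij Ac Kfu by (simp add: kx scalar_prod_def)
    also have "(\<Sum>a=0..<m. Matrix.row A i $ a * Matrix.row Kfu j $ a) = (\<Sum>a<m. A $$ (i,a) * k (x j) (z a))"
      unfolding lessThan_atLeast0 using Ac Kfu ij by (intro sum.cong refl) (auto simp: kxz)
    finally have "(Kff - A * Kfu\<^sup>T) $$ (i, j) = k (x i) (x j) - (\<Sum>a<m. A $$ (i,a) * k (x j) (z a))" .
    moreover have "\<bar>k (x i) (x j) - (\<Sum>a<m. A $$ (i,a) * k (x j) (z a))\<bar> \<le> 2 * (\<beta> + real m * \<beta> * \<gamma>)"
      by (rule scalar_core[where Kz="\<lambda>a b. k (z a) (z b)" and Kxz="\<lambda>i b. k (x i) (z b)"
            and A="\<lambda>i a. A $$ (i,a)", OF om AK E D XX ij b g])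
    ultimately show "\<bar>(Kff - A * Kfu\<^sup>T) $$ (i, j)\<bar> \<le> 2 * (\<beta> + real m * \<beta> * \<gamma>)" by simp
  qed
qed

end
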